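(* Let $A$ be a nonzero $n\times n$ matrix over $\mathbb{C}$ (or $\mathbb{R}$). Then $A^2\otimes A=A\otimes A^2$ if and only if $A^2=\mu A$ for some scalar $\mu$.
   Context: Here $\otimes$ denotes the Kronecker product of matrices: for $A=[a_{ij}]$, $A\otimes B$ is the block matrix whose $(i,j)$ block is $a_{ij}B$. *)

theory Defs
  imports "HOL-Analysis.Analysis"
begin

text \<open>Kronecker product of square matrices indexed by a finite type 'n.
  The result is indexed by pairs: row r=(i,k), column c=(j,l), entry A(i,j) * B(k,l),
  i.e. the (i,j) block is A(i,j) B.\<close>
definition kron :: "'a::times ^'n ^'n \<Rightarrow> 'a ^'n ^'n \<Rightarrow> 'a ^('n \<times> 'n) ^('n \<times> 'n)"
  (infixl "\<otimes>\<^sub>K" 70) where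
  "A \<otimes>\<^sub>K B = (\<chi> r c. A $ fst r $ fst c * B $ snd r $ snd c)"

end

theory Submission
  imports Defs
begin

lemma kron_eq_iff:
  fixes A B :: "'a::times ^'n ^'n"
  shows "B \<otimes>\<^sub>K A = A \<otimes>\<^sub>K B \<longleftrightarrow> (\<forall>i j k l. B$i$j * A$k$l = A$i$j * B$k$l)"
proof
  assume h: "B \<otimes>\<^sub>K A = A \<otimes>\<^sub>K B"
  show "\<forall>i j k l. B$i$j * A$k$l = A$i$j * B$k$l"
  proof (intro allI)
    fix i j k l
    have "(B \<otimes>\<^sub>K A) $ (i,k) $ (j,l) = (A \<otimes>\<^sub>K B) $ (i,k) $ (j,l)" using h by simp
    then show "B$i$j * A$k$l = A$i$j * B$k$l" unfolding kron_def by simp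
  qed
next
  assume h: "\<forall>i j k l. B$i$j * A$k$l = A$i$j * B$k$l"
  show "B \<otimes>\<^sub>K A = A \<otimes>\<^sub>K B"
    unfolding kron_def
    by (rule vec_eq_iff[THEN iffD2], intro allI, rule vec_eq_iff[THEN iffD2], intro allI) (simp add: h)
qed

lemma kron_gen:
  fixes A B :: "'a::field ^'n ^'n"
  assumes "A \<noteq> 0"
  shows "B \<otimes>\<^sub>K A = A \<otimes>\<^sub>K B \<longleftrightarrow> (\<exists>\<mu>. B = (\<chi> i j. \<mu> * A $ i $ j))"
proof -
  obtain k l where kl: "A $ k $ l \<noteq> 0"
    using assms by (metis vec_eq_iff zero_index)
  show ?thesis
  proof
    assume "B \<otimes>\<^sub>K A = A \<otimes>\<^sub>K B"
    then have h: "\<And>i j. B$i$j * A$k$l = A$i$j * B$k$l" using kron_eq_iff by blast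
    have "B = (\<chi> i j. (B$k$l / A$k$l) * A $ i $ j)"
    proof (rule vec_eq_iff[THEN iffD2], intro allI, rule vec_eq_iff[THEN iffD2], intro allI)
      fix i j
      have "B$i$j = A$i$j * B$k$l / A$k$l" using h[of i j] kl by (simp add: eq_divide_eq)
      then show "B $ i $ j = (\<chi> i j. (B$k$l / A$k$l) * A $ i $ j) $ i $ j" by simp
    qed
    then show "\<exists>\<mu>. B = (\<chi> i j. \<mu> * A $ i $ j)" by blast
  next
    assume "\<exists>\<mu>. B = (\<chi> i j. \<mu> * A $ i $ j)"
    then obtain \<mu> where b: "B = (\<chi> i j. \<mu> * A $ i $ j)" by blast
    have "\<forall>i j k l. B$i$j * A$k$l = A$i$j * B$k$l" unfolding b by (simp add: ac_simps)
    then show "B \<otimes>\<^sub>K A = A \<otimes>\<^sub>K B" using kron_eq_iff by blast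
  qed
qed

theorem lemma2p6:
  shows "(\<forall>A :: complex ^'n ^'n. A \<noteq> 0 \<longrightarrow>
            ((A ** A) \<otimes>\<^sub>K A = A \<otimes>\<^sub>K (A ** A) \<longleftrightarrow>
             (\<exists>\<mu>::complex. A ** A = (\<chi> i j. \<mu> * A $ i $ j))))
       \<and> (\<forall>A :: real ^'n ^'n. A \<noteq> 0 \<longrightarrow>
            ((A ** A) \<otimes>\<^sub>K A = A \<otimes>\<^sub>K (A ** A) \<longleftrightarrow>
             (\<exists>\<mu>::real. A ** A = (\<chi> i j. \<mu> * A $ i $ j))))"
proof (intro conjI allI impI)
  fix A :: "complex ^'n ^'n" assume "A \<noteq> 0"
  then show "(A ** A) \<otimes>\<^sub>K A = A \<otimes>\<^sub>K (A ** A) \<longleftrightarrow>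
             (\<exists>\<mu>::complex. A ** A = (\<chi> i j. \<mu> * A $ i $ j))" by (rule kron_gen)
next
  fix A :: "real ^'n ^'n" assume "A \<noteq> 0"
  then show "(A ** A) \<otimes>\<^sub>K A = A \<otimes>\<^sub>K (A ** A) \<longleftrightarrow>
             (\<exists>\<mu>::real. A ** A = (\<chi> i j. \<mu> * A $ i $ j))" by (rule kron_gen)
qed

end
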